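(* For a real parameter $g$, let $H^{(7)}(g)$ be the $7\times7$ real matrix with diagonal $(1,3,5,7,9,11,13)$, entries $H_{1,3}=\sqrt3 g$, $H_{2,4}=\sqrt2 g$, $H_{3,5}=2g$, $H_{4,6}=\sqrt2 g$, $H_{5,7}=\sqrt3 g$, entries $H_{n+2,n}=-H_{n,n+2}$ for $n=1,\dots,5$, and all other entries zero. Then the eigenvalues of $H^{(7)}(g)$ are $$E_m(g)=7+m\sqrt{4-g^2},\qquad m\in\{-3,-2,-1,0,1,2,3\}.$$ In particular, for $0\le g<2$ all seven eigenvalues are real and pairwise distinct, while at $g=2$ all of them coincide at $\eta=7$ and $H^{(7)}(2)$ is not diagonalizable: its Jordan form consists of two Jordan blocks for the eigenvalue $7$, of sizes $4$ and $3$ (geometric multiplicity $2$). *)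

theory Defs
  imports "Jordan_Normal_Form.Jordan_Normal_Form_Uniqueness"
begin

text \<open>The 7x7 matrix H^(7)(g), 0-indexed: entry (i,j) here is the paper's entry (i+1,j+1).\<close>
definition Hsup :: "real \<Rightarrow> nat \<Rightarrow> real" where
  "Hsup g i = (if i = 0 then sqrt 3 * g else if i = 1 then sqrt 2 * g else if i = 2 then 2 * g
      else if i = 3 then sqrt 2 * g else if i = 4 then sqrt 3 * g else 0)"

definition H7 :: "real \<Rightarrow> real mat" where
  "H7 g = mat 7 7 (\<lambda>(i,j). if i = j then 2 * real i + 1
      else if j = i + 2 then Hsup g i
      else if i = j + 2 then - Hsup g j
      else 0)"

text \<open>Paper's eigenvalue formula, as complex numbers (complex square root for g > 2).\<close>
definition Eig :: "real \<Rightarrow> int \<Rightarrow> complex" where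
  "Eig g m = 7 + of_int m * csqrt (complex_of_real (4 - g^2))"

definition diagonalizable_mat :: "'a :: semiring_1 mat \<Rightarrow> bool" where
  "diagonalizable_mat A = (\<exists>D. similar_mat A D \<and> diagonal_mat D)"

end

theory Submission
  imports Defs
begin




lemma det_mat_0: "det (mat 0 0 f :: 'a::comm_ring_1 mat) = 1"
  by (rule det_dim_zero) auto

lemma det_mat_Suc:
  "det (mat (Suc n) (Suc n) f :: 'a::comm_ring_1 mat) =
   (\<Sum>j<Suc n. f (0,j) * ((-1)^j * det (mat n n (\<lambda>(a,b). f (Suc a, if b < j then b else Suc b)))))"
proof -
  have "det (mat (Suc n) (Suc n) f) = (\<Sum>j<Suc n. mat (Suc n) (Suc n) f $$ (0,j) * cofactor (mat (Suc n) (Suc n) f) 0 j)"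
    by (rule laplace_expansion_row) auto
  also have "\<dots> = (\<Sum>j<Suc n. f (0,j) * ((-1)^j * det (mat n n (\<lambda>(a,b). f (Suc a, if b < j then b else Suc b)))))"
  proof (rule sum.cong[OF refl])
    fix j assume j: "j \<in> {..<Suc n}"
    have "mat_delete (mat (Suc n) (Suc n) f) 0 j = mat n n (\<lambda>(a,b). f (Suc a, if b < j then b else Suc b))"
      unfolding mat_delete_def by (rule cong_mat) auto
    then show "mat (Suc n) (Suc n) f $$ (0,j) * cofactor (mat (Suc n) (Suc n) f) 0 j = f (0,j) * ((-1)^j * det (mat n n (\<lambda>(a,b). f (Suc a, if b < j then b else Suc b))))"
      using j unfolding cofactor_def by simp
  qed
  finally show ?thesis .
qed


function detl :: "'a::comm_ring_1 list list \<Rightarrow> 'a" where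
  "detl [] = 1"
| "detl (r # rs) = (\<Sum>j\<leftarrow>[0..<length r]. (-1)^j * r!j * detl (map (\<lambda>xs. take j xs @ drop (Suc j) xs) rs))"
  by pat_completeness auto
termination by (relation "measure length") auto


lemma detl_correct:
  "length rws = n \<Longrightarrow> (\<forall>r\<in>set rws. length r = n) \<Longrightarrow>
   det (mat_of_rows_list n rws :: 'a::comm_ring_1 mat) = detl rws"
proof (induction n arbitrary: rws)
  case 0
  then show ?case by (simp add: mat_of_rows_list_def det_mat_0)
next
  case (Suc n)
  then obtain r rs where rws: "rws = r # rs" and lr: "length r = Suc n" and lrs: "length rs = n"
    and rs: "\<forall>x\<in>set rs. length x = Suc n"
    by (cases rws) auto
  have "det (mat_of_rows_list (Suc n) rws) =
    (\<Sum>j<Suc n. r ! j * ((-1)^j * det (mat n n (\<lambda>(a,b). rs ! a ! (if b < j then b else Suc b)))))"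
    unfolding mat_of_rows_list_def rws using lrs
    by (simp add: det_mat_Suc del: sum.lessThan_Suc)
  also have "\<dots> = (\<Sum>j<Suc n. (-1)^j * r ! j * detl (map (\<lambda>xs. take j xs @ drop (Suc j) xs) rs))"
  proof (rule sum.cong[OF refl])
    fix j assume j: "j \<in> {..<Suc n}"
    let ?rs = "map (\<lambda>xs. take j xs @ drop (Suc j) xs) rs"
    have "mat n n (\<lambda>(a,b). rs ! a ! (if b < j then b else Suc b)) = mat_of_rows_list n ?rs"
      unfolding mat_of_rows_list_def
    proof (intro cong_mat)
      fix a b assume a: "a < n" and b: "b < n"
      have la: "length (rs ! a) = Suc n" using rs a lrs by auto
      show "(\<lambda>(a,b). rs ! a ! (if b < j then b else Suc b)) (a,b) = (\<lambda>(i, j). ?rs ! i ! j) (a,b)"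
        using la b lrs j a by (auto simp: nth_append min_def)
    qed (use lrs in auto)
    also have "det \<dots> = detl ?rs"
      by (rule Suc.IH) (use lrs rs j in auto)
    finally show "r ! j * ((-1)^j * det (mat n n (\<lambda>(a,b). rs ! a ! (if b < j then b else Suc b)))) =
      (-1)^j * r ! j * detl ?rs" by simp
  qed
  also have "\<dots> = detl rws"
    unfolding rws detl.simps lr by (simp add: interv_sum_list_conv_sum_set_nat atLeast0LessThan)
  finally show ?case .
qed

definition mmul :: "nat \<Rightarrow> 'a::semiring_0 list list \<Rightarrow> 'a list list \<Rightarrow> 'a list list" where
  "mmul n xs ys = map (\<lambda>r. map (\<lambda>j. \<Sum>k\<leftarrow>[0..<length ys]. r!k * ys!k!j) [0..<n]) xs"

lemma mmul_correct:
  assumes "\<forall>r\<in>set xs. length r = length ys" "\<forall>r\<in>set ys. length r = n"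
  shows "mat_of_rows_list (length ys) xs * mat_of_rows_list n ys = mat_of_rows_list n (mmul n xs ys)"
  unfolding mat_of_rows_list_def mmul_def
  apply (rule eq_matI)
  using assms by (auto simp: scalar_prod_def interv_sum_list_conv_sum_set_nat atLeast0LessThan intro!: sum.cong)

lemma perm_similar:
  fixes A B :: "'a::field mat"
  assumes A: "A \<in> carrier_mat n n" and B: "B \<in> carrier_mat n n"
    and p: "\<And>i. i < n \<Longrightarrow> p i < n" and inj: "inj_on p {..<n}"
    and eq: "\<And>i j. i < n \<Longrightarrow> j < n \<Longrightarrow> A $$ (i,j) = B $$ (p i, p j)"
  shows "similar_mat A B"
proof -
  define P :: "'a mat" where "P = mat n n (\<lambda>(i,k). if k = p i then 1 else 0)"
  define Q :: "'a mat" where "Q = mat n n (\<lambda>(k,j). if k = p j then 1 else 0)"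
  have P: "P \<in> carrier_mat n n" and Q: "Q \<in> carrier_mat n n" unfolding P_def Q_def by auto
  have PQ: "P * Q = 1\<^sub>m n"
  proof (rule eq_matI)
    fix i j assume i: "i < dim_row (1\<^sub>m n)" and j: "j < dim_col (1\<^sub>m n)"
    have "(P * Q) $$ (i,j) = (\<Sum>k\<in>{0..<n}. (if k = p i then 1 else 0) * (if k = p j then 1 else 0))"
      using i j by (simp add: P_def Q_def scalar_prod_def)
    also have "\<dots> = (if p i = p j then 1 else 0)"
      using p[of i] p[of j] i j by (simp add: if_distrib[of "\<lambda>x. x * _"] sum.delta cong: if_cong)
    also have "\<dots> = 1\<^sub>m n $$ (i,j)" using inj i j by (auto dest: inj_onD)
    finally show "(P * Q) $$ (i,j) = 1\<^sub>m n $$ (i,j)" .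
  qed (auto simp: P_def Q_def)
  have QP: "Q * P = 1\<^sub>m n" by (rule mat_mult_left_right_inverse[OF P Q PQ])
  have BQ: "(B * Q) $$ (k,j) = B $$ (k, p j)" if "k < n" "j < n" for k j
  proof -
    have "(B * Q) $$ (k,j) = (\<Sum>l\<in>{0..<n}. B $$ (k,l) * (if l = p j then 1 else 0))"
      using that B by (simp add: Q_def scalar_prod_def)
    also have "\<dots> = B $$ (k, p j)" using p[of j] that by (simp add: if_distrib[of "\<lambda>x. _ * x"] sum.delta cong: if_cong)
    finally show ?thesis .
  qed
  have "A = P * (B * Q)"
  proof (rule eq_matI)
    fix i j assume i: "i < dim_row (P * (B * Q))" and j: "j < dim_col (P * (B * Q))"
    have i': "i < n" and j': "j < n" using i j B by (auto simp: P_def Q_def)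
    have "(P * (B * Q)) $$ (i,j) = (\<Sum>k\<in>{0..<n}. (if k = p i then 1 else 0) * (B * Q) $$ (k,j))"
      using i' j' B by (simp add: P_def Q_def scalar_prod_def)
    also have "\<dots> = (B * Q) $$ (p i, j)" using p[of i] i' by (simp add: if_distrib[of "\<lambda>x. x * _"] sum.delta cong: if_cong)
    also have "\<dots> = A $$ (i,j)" using BQ p i' j' eq by auto
    finally show "A $$ (i,j) = (P * (B * Q)) $$ (i,j)" by simp
  qed (use A B in \<open>auto simp: P_def Q_def\<close>)
  hence "A = P * B * Q" using P Q B by (simp add: assoc_mult_mat[of P n n B n Q n])
  then show ?thesis unfolding similar_mat_def
    by (intro exI) (rule similar_mat_witI[OF PQ QP _ A B P Q])
qed

lemma char_poly_block:
  assumes A: "A \<in> carrier_mat n n" and B: "B \<in> carrier_mat m m"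
  shows "char_poly (four_block_mat A (0\<^sub>m n m) (0\<^sub>m m n) B) = char_poly A * char_poly (B :: 'a::idom mat)"
proof -
  let ?cm = "\<lambda> A. [:0, 1:] \<cdot>\<^sub>m 1\<^sub>m (dim_row A) + map_mat (\<lambda>a. [:- a:]) A"
  have "char_poly (four_block_mat A (0\<^sub>m n m) (0\<^sub>m m n) B) = det (?cm (four_block_mat A (0\<^sub>m n m) (0\<^sub>m m n) B))"
    unfolding char_poly_defs by simp
  also have "?cm (four_block_mat A (0\<^sub>m n m) (0\<^sub>m m n) B) = four_block_mat (?cm A) (0\<^sub>m n m) (0\<^sub>m m n) (?cm B)"
    by (rule eq_matI, insert A B, auto simp: one_poly_def)
  also have "det \<dots> = det (?cm A) * det (?cm B)"
    by (rule det_four_block_mat_lower_left_zero, insert A B, auto)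
  also have "\<dots> = char_poly A * char_poly B" unfolding char_poly_defs ..
  finally show ?thesis .
qed


lemma less7: "(i::nat) < 7 \<longleftrightarrow> i = 0 \<or> i = 1 \<or> i = 2 \<or> i = 3 \<or> i = 4 \<or> i = 5 \<or> i = 6" by auto
lemma less4: "(i::nat) < 4 \<longleftrightarrow> i = 0 \<or> i = 1 \<or> i = 2 \<or> i = 3" by auto
lemma less3: "(i::nat) < 3 \<longleftrightarrow> i = 0 \<or> i = 1 \<or> i = 2" by auto

definition A4 :: "real \<Rightarrow> complex mat" where
  "A4 g = mat 4 4 (\<lambda>(i,j). [[1, of_real (sqrt 3 * g), 0, 0], [- of_real (sqrt 3 * g), 5, of_real (2 * g), 0],
     [0, - of_real (2 * g), 9, of_real (sqrt 3 * g)], [0, 0, - of_real (sqrt 3 * g), 13]] ! i ! j)"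

definition B3 :: "real \<Rightarrow> complex mat" where
  "B3 g = mat 3 3 (\<lambda>(i,j). [[3, of_real (sqrt 2 * g), 0], [- of_real (sqrt 2 * g), 7, of_real (sqrt 2 * g)],
     [0, - of_real (sqrt 2 * g), 11]] ! i ! j)"

lemma A4_carrier: "A4 g \<in> carrier_mat 4 4" by (simp add: A4_def)
lemma B3_carrier: "B3 g \<in> carrier_mat 3 3" by (simp add: B3_def)

lemma H7_carrier: "H7 g \<in> carrier_mat 7 7" by (simp add: H7_def)

lemma H7_similar_block:
  "similar_mat (map_mat complex_of_real (H7 g)) (four_block_mat (A4 g) (0\<^sub>m 4 3) (0\<^sub>m 3 4) (B3 g))"
proof (rule perm_similar[where n = 7 and p = "\<lambda>i. if even i then i div 2 else 4 + i div 2"])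
  show "inj_on (\<lambda>i::nat. if even i then i div 2 else 4 + i div 2) {..<7}"
    by (auto simp: inj_on_def) (metis odd_two_times_div_two_succ)
  fix i j :: nat assume i: "i < 7" and j: "j < 7"
  show "map_mat complex_of_real (H7 g) $$ (i, j) =
    four_block_mat (A4 g) (0\<^sub>m 4 3) (0\<^sub>m 3 4) (B3 g) $$
    (if even i then i div 2 else 4 + i div 2, if even j then j div 2 else 4 + j div 2)"
    using i j A4_carrier[of g] B3_carrier[of g] unfolding less7
    apply (elim disjE)
    apply (simp_all add: H7_def Hsup_def A4_def B3_def)
    done
qed (use H7_carrier[of g] A4_carrier[of g] B3_carrier[of g] in \<open>auto simp: less7\<close>)


lemma detl_correct':
  "length rws = n \<Longrightarrow> (\<forall>r\<in>set rws. length r = n) \<Longrightarrow>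
   det (mat n n (\<lambda>(i,j). rws ! i ! j) :: 'a::comm_ring_1 mat) = detl rws"
  using detl_correct[of rws n] unfolding mat_of_rows_list_def by simp

lemma r3: "complex_of_real (sqrt 3) ^ 2 = 3"
  by (metis of_real_numeral of_real_power real_sqrt_pow2 zero_le_numeral)
lemma r2: "complex_of_real (sqrt 2) ^ 2 = 2"
  by (metis of_real_numeral of_real_power real_sqrt_pow2 zero_le_numeral)

lemma char_A4: "poly (char_poly (A4 g)) x =
   ((x-7)^2 - 9*(4 - (complex_of_real g)^2)) * ((x-7)^2 - (4 - (complex_of_real g)^2))"
proof -
  let ?a = "complex_of_real (sqrt 3 * g)" and ?b = "complex_of_real (2 * g)"
  let ?L = "[[x-1, -?a, 0, 0], [?a, x-5, -?b, 0], [0, ?b, x-9, -?a], [0, 0, ?a, x-13]]"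
  have "poly (char_poly (A4 g)) x = det (- char_matrix (A4 g) x)" by (rule char_poly_matrix[OF A4_carrier])
  also have "- char_matrix (A4 g) x = mat 4 4 (\<lambda>(i,j). ?L ! i ! j)"
  proof (rule eq_matI)
    fix i j assume "i < dim_row (mat 4 4 (\<lambda>(i,j). ?L ! i ! j))" "j < dim_col (mat 4 4 (\<lambda>(i,j). ?L ! i ! j))"
    then have "i < 4" "j < 4" by auto
    then show "(- char_matrix (A4 g) x) $$ (i,j) = mat 4 4 (\<lambda>(i,j). ?L ! i ! j) $$ (i,j)"
      unfolding less4 apply (elim disjE) by (simp_all add: char_matrix_def A4_def)
  qed (simp_all add: char_matrix_def A4_def)
  also have "det \<dots> = detl ?L" by (rule detl_correct') auto
  also have "\<dots> = (x-1)*((x-5)*((x-9)*(x-13)+?a*?a)+?b*?b*(x-13)) + ?a*?a*((x-9)*(x-13)+?a*?a)"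
    by (simp add: upt_rec)
  also have "?a * ?a = 3 * (complex_of_real g)^2"
    using r3 by (simp add: power2_eq_square algebra_simps)
  also have "?b * ?b = 4 * (complex_of_real g)^2"
    by (simp add: power2_eq_square algebra_simps)
  also have "(x-1)*((x-5)*((x-9)*(x-13)+3 * (complex_of_real g)^2)+4 * (complex_of_real g)^2*(x-13)) + 3 * (complex_of_real g)^2*((x-9)*(x-13)+3 * (complex_of_real g)^2)
     = ((x-7)^2 - 9*(4 - (complex_of_real g)^2)) * ((x-7)^2 - (4 - (complex_of_real g)^2))"
    by (simp add: algebra_simps power2_eq_square)
  finally show ?thesis .
qed

lemma char_B3: "poly (char_poly (B3 g)) x =
   (x-7) * ((x-7)^2 - 4*(4 - (complex_of_real g)^2))"
proof -
  let ?a = "complex_of_real (sqrt 2 * g)"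
  let ?L = "[[x-3, -?a, 0], [?a, x-7, -?a], [0, ?a, x-11]]"
  have "poly (char_poly (B3 g)) x = det (- char_matrix (B3 g) x)" by (rule char_poly_matrix[OF B3_carrier])
  also have "- char_matrix (B3 g) x = mat 3 3 (\<lambda>(i,j). ?L ! i ! j)"
  proof (rule eq_matI)
    fix i j assume "i < dim_row (mat 3 3 (\<lambda>(i,j). ?L ! i ! j))" "j < dim_col (mat 3 3 (\<lambda>(i,j). ?L ! i ! j))"
    then have "i < 3" "j < 3" by auto
    then show "(- char_matrix (B3 g) x) $$ (i,j) = mat 3 3 (\<lambda>(i,j). ?L ! i ! j) $$ (i,j)"
      unfolding less3 apply (elim disjE) by (simp_all add: char_matrix_def B3_def)
  qed (simp_all add: char_matrix_def B3_def)
  also have "det \<dots> = detl ?L" by (rule detl_correct') auto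
  also have "\<dots> = (x-3)*((x-7)*(x-11)+?a*?a) + ?a*?a*(x-11)"
    by (simp add: upt_rec)
  also have "?a * ?a = 2 * (complex_of_real g)^2"
    using r2 by (simp add: power2_eq_square algebra_simps)
  also have "(x-3)*((x-7)*(x-11)+2 * (complex_of_real g)^2) + 2 * (complex_of_real g)^2*(x-11) = (x-7) * ((x-7)^2 - 4*(4 - (complex_of_real g)^2))"
    by (simp add: algebra_simps power2_eq_square)
  finally show ?thesis .
qed


lemma set7: "{-3..3::int} = {-3,-2,-1,0,1,2,3}" by auto

lemma prod7: "(\<Prod>m\<in>{-3..3::int}. (y::complex) - of_int m * s) = (y^2 - 9*s^2)*(y^2 - s^2)*(y*(y^2 - 4*s^2))"
  unfolding set7 by (simp add: algebra_simps power2_eq_square)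

lemma part1: "char_poly (map_mat complex_of_real (H7 g)) = (\<Prod>m\<in>{-3..3::int}. [:- Eig g m, 1:])"
proof -
  have "char_poly (map_mat complex_of_real (H7 g)) = char_poly (four_block_mat (A4 g) (0\<^sub>m 4 3) (0\<^sub>m 3 4) (B3 g))"
    by (rule char_poly_similar[OF H7_similar_block])
  also have "\<dots> = char_poly (A4 g) * char_poly (B3 g)" by (rule char_poly_block[OF A4_carrier B3_carrier])
  also have "\<dots> = (\<Prod>m\<in>{-3..3::int}. [:- Eig g m, 1:])"
  proof (rule poly_eq_poly_eq_iff[THEN iffD1], rule ext)
    fix x
    define s where "s = csqrt (complex_of_real (4 - g^2))"
    have s2: "4 - (complex_of_real g)^2 = s^2" unfolding s_def by simp
    have Es: "Eig g m = 7 + of_int m * s" for m by (simp add: Eig_def s_def)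
    have "poly (\<Prod>m\<in>{-3..3::int}. [:- Eig g m, 1:]) x = (\<Prod>m\<in>{-3..3::int}. (x - 7) - of_int m * s)"
      unfolding poly_prod by (rule prod.cong) (simp_all add: Es)
    also have "\<dots> = ((x-7)^2 - 9*s^2) * ((x-7)^2 - s^2) * ((x-7) * ((x-7)^2 - 4*s^2))"
      by (rule prod7)
    finally show "poly (char_poly (A4 g) * char_poly (B3 g)) x = poly (\<Prod>m\<in>{-3..3::int}. [:- Eig g m, 1:]) x"
      by (simp add: char_A4 char_B3 s2)
  qed
  finally show ?thesis .
qed

lemma Hc_carrier: "map_mat complex_of_real (H7 g) \<in> carrier_mat 7 7" using H7_carrier by simp

lemma part2:
  assumes g: "0 \<le> g" "g < 2"
  shows "(\<forall>e. eigenvalue (map_mat complex_of_real (H7 g)) e \<longrightarrow> e \<in> \<real>)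
          \<and> card {e. eigenvalue (map_mat complex_of_real (H7 g)) e} = 7"
proof -
  define r where "r = sqrt (4 - g^2)"
  have gg: "g^2 < 4" using power_strict_mono[of g 2 2] g by simp
  hence r: "r > 0" unfolding r_def by simp
  have E: "Eig g m = complex_of_real (7 + of_int m * r)" for m
  proof -
    have "csqrt (complex_of_real (4 - g^2)) = complex_of_real r" using gg by (simp add: r_def)
    then show ?thesis unfolding Eig_def by simp
  qed
  have eq: "{e. eigenvalue (map_mat complex_of_real (H7 g)) e} = Eig g ` {-3..3}"
    unfolding eigenvalue_root_char_poly[OF Hc_carrier] part1 poly_prod
    by (auto simp: prod_zero_iff)
  have inj: "inj_on (Eig g) {-3..3}"
    unfolding inj_on_def E using r by auto
  show ?thesis
  proof (intro conjI allI impI)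
    fix e assume "eigenvalue (map_mat complex_of_real (H7 g)) e"
    then have "e \<in> Eig g ` {-3..3}" using eq by blast
    then show "e \<in> \<real>" using E by auto
  next
    show "card {e. eigenvalue (map_mat complex_of_real (H7 g)) e} = 7"
      unfolding eq using card_image[OF inj] by simp
  qed
qed



lemma mmul_correct':
  assumes "length xs = m" "length ys = k" "\<forall>r\<in>set xs. length r = k" "\<forall>r\<in>set ys. length r = n"
  shows "mat m k (\<lambda>(i,j). xs ! i ! j) * mat k n (\<lambda>(i,j). ys ! i ! j) = mat m n (\<lambda>(i,j). mmul n xs ys ! i ! j)"
  using mmul_correct[of xs ys n] assms unfolding mat_of_rows_list_def by (simp add: mmul_def)

definition HL :: "real list list" where "HL = [[1,0,2*sqrt 3,0,0,0,0],[0,3,0,2*sqrt 2,0,0,0],[-2*sqrt 3,0,5,0,4,0,0],[0,-2*sqrt 2,0,7,0,2*sqrt 2,0],[0,0,-4,0,9,0,2*sqrt 3],[0,0,0,-2*sqrt 2,0,11,0],[0,0,0,0,-2*sqrt 3,0,13]]"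
definition PL :: "real list list" where "PL = [[-48,24,-6,1,0,0,0],[0,0,0,0,8,-4,1],[-48*sqrt 3,16*sqrt 3,-2*sqrt 3,0,0,0,0],[0,0,0,0,8*sqrt 2,-2*sqrt 2,0],[-48*sqrt 3,8*sqrt 3,0,0,0,0,0],[0,0,0,0,8,0,0],[-48,0,0,0,0,0,0]]"
definition QL :: "real list list" where "QL = [[0,0,0,0,0,0,-1/48],[0,0,0,0,sqrt 3/24,0,-1/8],[0,0,-sqrt 3/6,0,sqrt 3/3,0,-1/2],[1,0,-sqrt 3,0,sqrt 3,0,-1],[0,0,0,0,0,1/8,0],[0,0,0,-sqrt 2/4,0,1/2,0],[0,1,0,-sqrt 2,0,1,0]]"
definition JL :: "real list list" where "JL = [[7,1,0,0,0,0,0],[0,7,1,0,0,0,0],[0,0,7,1,0,0,0],[0,0,0,7,0,0,0],[0,0,0,0,7,1,0],[0,0,0,0,0,7,1],[0,0,0,0,0,0,7]]"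
definition IL :: "real list list" where "IL = [[1,0,0,0,0,0,0],[0,1,0,0,0,0,0],[0,0,1,0,0,0,0],[0,0,0,1,0,0,0],[0,0,0,0,1,0,0],[0,0,0,0,0,1,0],[0,0,0,0,0,0,1]]"

lemma s3: "sqrt 3 * sqrt 3 = (3::real)" "sqrt 3 * (sqrt 3 * x) = 3 * (x::real)" by simp_all
lemma s2: "sqrt 2 * sqrt 2 = (2::real)" "sqrt 2 * (sqrt 2 * x) = 2 * (x::real)" by simp_all

lemma HP_list: "mmul 7 HL PL = mmul 7 PL JL"
  by (simp add: mmul_def upt_rec HL_def PL_def JL_def algebra_simps s3 s2)

lemma PQ_list: "mmul 7 PL QL = IL"
  by (simp add: mmul_def upt_rec IL_def PL_def QL_def algebra_simps s3 s2)


definition matl :: "nat \<Rightarrow> real list list \<Rightarrow> real mat" where "matl n L = mat n n (\<lambda>(i,j). L ! i ! j)"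

lemma H2: "H7 2 = matl 7 HL"
proof (rule eq_matI)
  fix i j assume "i < dim_row (matl 7 HL)" "j < dim_col (matl 7 HL)"
  then have "i < 7" "j < 7" by (auto simp: matl_def)
  then show "H7 2 $$ (i,j) = matl 7 HL $$ (i,j)"
    unfolding less7 apply (elim disjE) by (simp_all add: H7_def Hsup_def HL_def matl_def)
qed (simp_all add: H7_def matl_def)

lemma J: "jordan_matrix [(4,7),(3,7::real)] = matl 7 JL"
proof (rule eq_matI)
  fix i j assume "i < dim_row (matl 7 JL)" "j < dim_col (matl 7 JL)"
  then have "i < 7" "j < 7" by (auto simp: matl_def)
  then show "jordan_matrix [(4,7),(3,7::real)] $$ (i,j) = matl 7 JL $$ (i,j)"
    unfolding less7 apply (elim disjE) by (simp_all add: jordan_matrix_Cons JL_def matl_def)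
qed (simp_all add: jordan_matrix_Cons matl_def)

lemma I7: "1\<^sub>m 7 = matl 7 IL"
proof (rule eq_matI)
  fix i j assume "i < dim_row (matl 7 IL)" "j < dim_col (matl 7 IL)"
  then have "i < 7" "j < 7" by (auto simp: matl_def)
  then show "1\<^sub>m 7 $$ (i,j) = matl 7 IL $$ (i,j)"
    unfolding less7 apply (elim disjE) by (simp_all add: IL_def matl_def)
qed (simp_all add: matl_def)

lemma matl_mult: "length xs = 7 \<Longrightarrow> length ys = 7 \<Longrightarrow> \<forall>r\<in>set xs. length r = 7 \<Longrightarrow> \<forall>r\<in>set ys. length r = 7 \<Longrightarrow>
   matl 7 xs * matl 7 ys = matl 7 (mmul 7 xs ys)"
  unfolding matl_def by (rule mmul_correct') auto

lemma jnf: "jordan_nf (H7 2) [(4, 7), (3, 7)]"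
proof -
  let ?P = "matl 7 PL" and ?Q = "matl 7 QL" and ?J = "matl 7 JL" and ?H = "matl 7 HL"
  have C: "?P \<in> carrier_mat 7 7" "?Q \<in> carrier_mat 7 7" "?J \<in> carrier_mat 7 7" "?H \<in> carrier_mat 7 7"
    by (auto simp: matl_def)
  have PQ: "?P * ?Q = 1\<^sub>m 7" unfolding I7 PQ_list[symmetric]
    by (rule matl_mult) (auto simp: PL_def QL_def)
  have QP: "?Q * ?P = 1\<^sub>m 7" by (rule mat_mult_left_right_inverse[OF C(1,2) PQ])
  have HP: "?H * ?P = ?P * ?J"
  proof -
    have "?H * ?P = matl 7 (mmul 7 HL PL)" by (rule matl_mult) (auto simp: HL_def PL_def)
    also have "\<dots> = matl 7 (mmul 7 PL JL)" by (simp only: HP_list)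
    also have "\<dots> = ?P * ?J" by (rule matl_mult[symmetric]) (auto simp: PL_def JL_def)
    finally show ?thesis .
  qed
  have "?H = ?H * (?P * ?Q)" using C by (simp add: PQ)
  also have "\<dots> = (?H * ?P) * ?Q" using C by (simp add: assoc_mult_mat[of _ 7 7 _ 7 _ 7])
  also have "\<dots> = ?P * ?J * ?Q" unfolding HP ..
  finally have "?H = ?P * ?J * ?Q" .
  then have "similar_mat ?H ?J" unfolding similar_mat_def
    by (intro exI) (rule similar_mat_witI[OF PQ QP _ C(4) C(3) C(1) C(2)])
  then show ?thesis unfolding jordan_nf_def H2 J by simp
qed

lemma dimgen: "dim_gen_eigenspace (H7 2) 7 1 = 2"
  using dim_gen_eigenspace[OF jnf, of 7 1] by simp


lemma less6: "(i::nat) < 6 \<longleftrightarrow> i = 0 \<or> i = 1 \<or> i = 2 \<or> i = 3 \<or> i = 4 \<or> i = 5" by auto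
lemma less5: "(i::nat) < 5 \<longleftrightarrow> i = 0 \<or> i = 1 \<or> i = 2 \<or> i = 3 \<or> i = 4" by auto
lemma less2: "(i::nat) < 2 \<longleftrightarrow> i = 0 \<or> i = 1" by auto

lemma J_ut: "upper_triangular (matl 7 JL)"
  unfolding upper_triangular_def
proof (intro allI impI)
  fix i j assume "i < dim_row (matl 7 JL)" "j < i"
  then have "i < 7" "j < i" by (auto simp: matl_def)
  then show "matl 7 JL $$ (i, j) = 0"
    unfolding less7 by (elim disjE) (auto simp: matl_def JL_def less6 less5 less4 less3 less2)
qed

lemma poly_char_J: "poly (char_poly (matl 7 JL)) d = (d - 7)^7"
proof -
  have C: "matl 7 JL \<in> carrier_mat 7 7" by (simp add: matl_def)
  have dg: "diag_mat (matl 7 JL) = replicate 7 7"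
    by (simp add: diag_mat_def matl_def JL_def upt_rec numeral_eq_Suc)
  show ?thesis unfolding char_poly_upper_triangular[OF C J_ut] dg map_replicate prod_list_replicate poly_power
    by simp
qed

lemma nondiag: "\<not> diagonalizable_mat (H7 2)"
proof
  assume "diagonalizable_mat (H7 2)"
  then obtain D where sim: "similar_mat (H7 2) D" and diag: "diagonal_mat D"
    unfolding diagonalizable_mat_def by auto
  from similar_matD[OF sim] obtain n P Q where carr: "{H7 2, D, P, Q} \<subseteq> carrier_mat n n"
    and PQ: "P * Q = 1\<^sub>m n" and HD: "H7 2 = P * D * Q" by blast
  have n: "n = 7" using carr H7_carrier[of 2] by auto
  have D: "D \<in> carrier_mat 7 7" and P: "P \<in> carrier_mat 7 7" and Q: "Q \<in> carrier_mat 7 7"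
    using carr n by auto
  have simJ: "similar_mat (H7 2) (matl 7 JL)" using jnf unfolding jordan_nf_def J by simp
  have cp: "char_poly D = char_poly (matl 7 JL)"
    using similar_mat_trans[OF similar_mat_sym[OF sim] simJ] by (rule char_poly_similar)
  have utD: "upper_triangular D" using diag D unfolding diagonal_mat_def upper_triangular_def by auto
  have Dii: "D $$ (i,i) = 7" if i: "i < 7" for i
  proof -
    have "D $$ (i,i) \<in> set (diag_mat D)" using i D by (auto simp: diag_mat_def)
    then have "poly (char_poly D) (D $$ (i,i)) = 0"
      unfolding char_poly_upper_triangular[OF D utD] poly_prod_list
      by (auto simp: prod_list_zero_iff)
    then have "(D $$ (i,i) - 7)^7 = 0" unfolding cp poly_char_J .
    then show ?thesis by simp
  qed
  have D7: "D = 7 \<cdot>\<^sub>m 1\<^sub>m 7"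
    by (rule eq_matI) (use D diag Dii in \<open>auto simp: diagonal_mat_def\<close>)
  have "P * (7 \<cdot>\<^sub>m 1\<^sub>m 7) = 7 \<cdot>\<^sub>m P"
    using mult_smult_distrib[OF P one_carrier_mat, of 7] P by simp
  then have "P * (7 \<cdot>\<^sub>m 1\<^sub>m 7) * Q = 7 \<cdot>\<^sub>m (P * Q)"
    using mult_smult_assoc_mat[OF P Q, of 7] by simp
  then have "H7 2 = 7 \<cdot>\<^sub>m 1\<^sub>m 7"
    unfolding HD D7 using PQ n by simp
  then have "H7 2 $$ (0,2) = (7 \<cdot>\<^sub>m 1\<^sub>m 7) $$ (0,2)" by simp
  then show False by (simp add: H7_def Hsup_def)
qed


theorem mainTheorem3:
  shows "(\<forall>g::real. char_poly (map_mat complex_of_real (H7 g))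
            = (\<Prod>m\<in>{-3..3::int}. [:- Eig g m, 1:]))
    \<and> (\<forall>g::real. 0 \<le> g \<and> g < 2 \<longrightarrow>
            (\<forall>e. eigenvalue (map_mat complex_of_real (H7 g)) e \<longrightarrow> e \<in> \<real>)
          \<and> card {e. eigenvalue (map_mat complex_of_real (H7 g)) e} = 7)
    \<and> (\<forall>m\<in>{-3..3::int}. Eig 2 m = 7)
    \<and> \<not> diagonalizable_mat (H7 2)
    \<and> jordan_nf (H7 2) [(4, 7), (3, 7)]
    \<and> dim_gen_eigenspace (H7 2) 7 1 = 2"
proof (intro conjI)
  show "\<forall>g::real. char_poly (map_mat complex_of_real (H7 g)) = (\<Prod>m\<in>{-3..3::int}. [:- Eig g m, 1:])"
    using part1 by blast
  show "\<forall>g::real. 0 \<le> g \<and> g < 2 \<longrightarrow>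
            (\<forall>e. eigenvalue (map_mat complex_of_real (H7 g)) e \<longrightarrow> e \<in> \<real>)
          \<and> card {e. eigenvalue (map_mat complex_of_real (H7 g)) e} = 7"
    using part2 by blast
  show "\<forall>m\<in>{-3..3::int}. Eig 2 m = 7" by (simp add: Eig_def)
qed (use nondiag jnf dimgen in auto)

end
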